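(* Let $\langle A,\to\rangle$ be a conditional algebra. Then for all $U,V\subseteq\mathrm{Ul}(A)$, $$U\to_{T_A}V=\bigcap_{(Y,O)}\ \bigcup_{\substack{a,b\in A\\ Y\subseteq\varphi(a),\ \varphi(b)\subseteq O}}\varphi(a\to b),$$ where $(Y,O)$ ranges over all pairs with $Y$ a closed subset of the Stone space of $A$ with $Y\subseteq U$ and $O$ an open subset with $V\subseteq O$; i.e., $\to_{T_A}$ is the $\pi$-extension of $\to$ to the canonical extension $\mathcal{P}(\mathrm{Ul}(A))$ of $A$. Moreover, $\langle\mathcal{P}(\mathrm{Ul}(A)),\to_{T_A}\rangle$ is a conditional algebra, so the variety of conditional algebras is closed under canonical extensions.
   Context: A conditional algebra is a pair $\langle A,\to\rangle$ where $A$ is a Boolean algebra and $\to$ is a binary operation on $A$ such that for all $a,b,c$: $a\to 1=1$; $(a\to b)\wedge(a\to c)=a\to(b\wedge c)$; $(a\vee b)\to c\le (a\to c)\wedge(b\to c)$. $\mathrm{Ul}(A)$ is the set of ultrafilters of $A$ with the Stone topology, $\varphi(a)=\{u: a\in u\}$. Filters include the improper filter $A$, and for a filter $F$, $\varphi(F)=\{u\in\mathrm{Ul}(A): F\subseteq u\}$. For $X,Y\subseteq A$, $D^{\to}_X(Y)=\{b\in A:\exists a\in Y,\ a\to b\in X\}$. $T_A(u,Z,v)$ holds iff there is a filter $F$ with $Z=\varphi(F)$ and $D^{\to}_u(F)\subseteq v$; $T_A(u,Z)=\{v:T_A(u,Z,v)\}$. For $U,V\subseteq\mathrm{Ul}(A)$,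 $U\to_{T_A}V=\{u: \text{for all } Z\subseteq U,\ T_A(u,Z)\subseteq V\}$. The canonical extension of $A$ is identified with $\mathcal{P}(\mathrm{Ul}(A))$ via $\varphi$. *)

theory Defs
  imports Main
begin

definition cond_alg :: "('a::boolean_algebra \<Rightarrow> 'a \<Rightarrow> 'a) \<Rightarrow> bool" where
  "cond_alg imp \<longleftrightarrow>
     (\<forall>a. imp a top = top) \<and>
     (\<forall>a b c. inf (imp a b) (imp a c) = imp a (inf b c)) \<and>
     (\<forall>a b c. imp (sup a b) c \<le> inf (imp a c) (imp b c))"

text \<open>Conditional algebra structure on the power set Boolean algebra P(X)
  (top = X, meet = intersection, join = union).\<close>
definition cond_alg_powerset :: "'b set \<Rightarrow> ('b set \<Rightarrow> 'b set \<Rightarrow> 'b set) \<Rightarrow> bool" where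
  "cond_alg_powerset X imp \<longleftrightarrow>
     (\<forall>U V. U \<subseteq> X \<and> V \<subseteq> X \<longrightarrow> imp U V \<subseteq> X) \<and>
     (\<forall>U. U \<subseteq> X \<longrightarrow> imp U X = X) \<and>
     (\<forall>U V W. U \<subseteq> X \<and> V \<subseteq> X \<and> W \<subseteq> X \<longrightarrow> imp U V \<inter> imp U W = imp U (V \<inter> W)) \<and>
     (\<forall>U V W. U \<subseteq> X \<and> V \<subseteq> X \<and> W \<subseteq> X \<longrightarrow> imp (U \<union> V) W \<subseteq> imp U W \<inter> imp V W)"

text \<open>Filters (the improper filter UNIV is allowed).\<close>
definition is_filter :: "'a::boolean_algebra set \<Rightarrow> bool" where
  "is_filter F \<longleftrightarrow> top \<in> F \<and> (\<forall>a\<in>F. \<forall>b. a \<le> b \<longrightarrow> b \<in> F) \<and>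
     (\<forall>a\<in>F. \<forall>b\<in>F. inf a b \<in> F)"

definition is_ultrafilter :: "'a::boolean_algebra set \<Rightarrow> bool" where
  "is_ultrafilter u \<longleftrightarrow> is_filter u \<and> u \<noteq> UNIV \<and>
     (\<forall>G. is_filter G \<and> G \<noteq> UNIV \<and> u \<subseteq> G \<longrightarrow> G = u)"

definition Ul :: "'a::boolean_algebra set set" where
  "Ul = {u. is_ultrafilter u}"

definition phi :: "'a::boolean_algebra \<Rightarrow> 'a set set" where
  "phi a = {u \<in> Ul. a \<in> u}"

definition phiF :: "'a::boolean_algebra set \<Rightarrow> 'a set set" where
  "phiF F = {u \<in> Ul. F \<subseteq> u}"

definition stone_open :: "'a::boolean_algebra set set \<Rightarrow> bool" where
  "stone_open W \<longleftrightarrow> W \<subseteq> Ul \<and> (\<forall>u\<in>W. \<exists>a. u \<in> phi a \<and> phi a \<subseteq> W)"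

definition stone_closed :: "'a::boolean_algebra set set \<Rightarrow> bool" where
  "stone_closed Y \<longleftrightarrow> Y \<subseteq> Ul \<and> stone_open (Ul - Y)"

definition D_imp :: "('a \<Rightarrow> 'a \<Rightarrow> 'a) \<Rightarrow> 'a set \<Rightarrow> 'a set \<Rightarrow> 'a set" where
  "D_imp imp X Y = {b. \<exists>a\<in>Y. imp a b \<in> X}"

definition T_rel :: "('a::boolean_algebra \<Rightarrow> 'a \<Rightarrow> 'a) \<Rightarrow> 'a set \<Rightarrow> 'a set set \<Rightarrow> 'a set \<Rightarrow> bool" where
  "T_rel imp u Z v \<longleftrightarrow> (\<exists>F. is_filter F \<and> Z = phiF F \<and> D_imp imp u F \<subseteq> v)"

definition T_img :: "('a::boolean_algebra \<Rightarrow> 'a \<Rightarrow> 'a) \<Rightarrow> 'a set \<Rightarrow> 'a set set \<Rightarrow> 'a set set" where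
  "T_img imp u Z = {v \<in> Ul. T_rel imp u Z v}"

definition imp_T :: "('a::boolean_algebra \<Rightarrow> 'a \<Rightarrow> 'a) \<Rightarrow> 'a set set \<Rightarrow> 'a set set \<Rightarrow> 'a set set" where
  "imp_T imp U V = {u \<in> Ul. \<forall>Z. Z \<subseteq> U \<longrightarrow> T_img imp u Z \<subseteq> V}"

end

theory Submission
  imports Defs
begin

lemma filt_top: "is_filter F \<Longrightarrow> top \<in> F" by (simp add: is_filter_def)
lemma filt_up: "is_filter F \<Longrightarrow> a \<in> F \<Longrightarrow> a \<le> b \<Longrightarrow> b \<in> F" by (auto simp add: is_filter_def)
lemma filt_inf: "is_filter F \<Longrightarrow> a \<in> F \<Longrightarrow> b \<in> F \<Longrightarrow> inf a b \<in> F" by (auto simp add: is_filter_def)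

lemma filt_proper: "is_filter F \<Longrightarrow> (F \<noteq> UNIV) = (bot \<notin> F)"
  using filt_up by fastforce

definition gen2 :: "'a::boolean_algebra set \<Rightarrow> 'a set \<Rightarrow> 'a set" where
  "gen2 D G = {x. \<exists>d\<in>D. \<exists>g\<in>G. inf d g \<le> x}"

lemma gen2_filter:
  assumes "is_filter D" "is_filter G" shows "is_filter (gen2 D G)"
  unfolding is_filter_def gen2_def
proof (intro conjI ballI allI impI)
  show "top \<in> {x. \<exists>d\<in>D. \<exists>g\<in>G. inf d g \<le> x}" using assms filt_top by fastforce
next
  fix a b assume "a \<in> {x. \<exists>d\<in>D. \<exists>g\<in>G. inf d g \<le> x}" "a \<le> b"
  then show "b \<in> {x. \<exists>d\<in>D. \<exists>g\<in>G. inf d g \<le> x}" by (blast intro: order_trans)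
next
  fix a b assume "a \<in> {x. \<exists>d\<in>D. \<exists>g\<in>G. inf d g \<le> x}" "b \<in> {x. \<exists>d\<in>D. \<exists>g\<in>G. inf d g \<le> x}"
  then obtain d g d' g' where h: "d \<in> D" "g \<in> G" "inf d g \<le> a" "d' \<in> D" "g' \<in> G" "inf d' g' \<le> b" by blast
  have "inf (inf d d') (inf g g') \<le> inf a b"
  proof -
    have "inf (inf d d') (inf g g') = inf (inf d g) (inf d' g')" by (simp add: inf_aci)
    also have "\<dots> \<le> inf a b" using h(3,6) by (rule inf_mono)
    finally show ?thesis .
  qed
  then show "inf a b \<in> {x. \<exists>d\<in>D. \<exists>g\<in>G. inf d g \<le> x}"
    using h assms filt_inf by blast
qed

lemma gen2_sub1: assumes "is_filter G" shows "D \<subseteq> gen2 D G"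
proof
  fix x assume "x \<in> D"
  moreover have "top \<in> G" using assms filt_top by blast
  moreover have "inf x top \<le> x" by simp
  ultimately show "x \<in> gen2 D G" unfolding gen2_def by blast
qed

lemma gen2_sub2: assumes "is_filter D" shows "G \<subseteq> gen2 D G"
proof
  fix x assume "x \<in> G"
  moreover have "top \<in> D" using assms filt_top by blast
  moreover have "inf top x \<le> x" by simp
  ultimately show "x \<in> gen2 D G" unfolding gen2_def by blast
qed

lemma gen2_bot_principal:
  assumes "bot \<in> gen2 F {x. c \<le> x}" shows "\<exists>f\<in>F. inf f c \<le> bot"
proof -
  obtain d g where dg: "d \<in> F" "c \<le> g" "inf d g \<le> bot" using assms unfolding gen2_def by blast
  have "inf d c \<le> inf d g" using dg(2) by (rule inf_mono[OF order_refl])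
  then have "inf d c \<le> bot" using dg(3) by (rule order_trans)
  then show ?thesis using dg(1) by blast
qed

lemma principal_filter: "is_filter {x. c \<le> x}"
  unfolding is_filter_def by auto

lemma ultra_exists:
  assumes F: "is_filter F" and nb: "bot \<notin> F"
  shows "\<exists>u\<in>Ul. F \<subseteq> u"
proof -
  let ?A = "{G. is_filter G \<and> bot \<notin> G \<and> F \<subseteq> G}"
  have "\<forall>C\<in>chains ?A. \<exists>U\<in>?A. \<forall>X\<in>C. X \<subseteq> U"
  proof
    fix C assume C: "C \<in> chains ?A"
    show "\<exists>U\<in>?A. \<forall>X\<in>C. X \<subseteq> U"
    proof (cases "C = {}")
      case True then show ?thesis using F nb by blast
    next
      case False
      have CA: "C \<subseteq> ?A" using C chainsD2 by blast
      have "is_filter (\<Union>C)"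
        unfolding is_filter_def
      proof (intro conjI ballI allI impI)
        show "top \<in> \<Union>C" using False CA filt_top by blast
      next
        fix a b assume "a \<in> \<Union>C" "a \<le> b" then show "b \<in> \<Union>C" using CA filt_up by blast
      next
        fix a b assume a: "a \<in> \<Union>C" and b: "b \<in> \<Union>C"
        then obtain X Y where X: "X \<in> C" "a \<in> X" and Y: "Y \<in> C" "b \<in> Y" by blast
        from chainsD[OF C X(1) Y(1)] show "inf a b \<in> \<Union>C"
        proof
          assume "X \<subseteq> Y" then show ?thesis using X Y CA filt_inf by blast
        next
          assume "Y \<subseteq> X" then show ?thesis using X Y CA filt_inf by blast
        qed
      qed
      moreover have "bot \<notin> \<Union>C" using CA by blast
      moreover have "F \<subseteq> \<Union>C" using CA False by blast
      ultimately show ?thesis by blast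
    qed
  qed
  from Zorn_Lemma2[OF this] obtain M where M: "M \<in> ?A" and mx: "\<forall>X\<in>?A. M \<subseteq> X \<longrightarrow> X = M" by blast
  have "is_ultrafilter M"
    unfolding is_ultrafilter_def using M mx filt_proper by blast
  then show ?thesis using M Ul_def by blast
qed

lemma ultra_filter: "u \<in> Ul \<Longrightarrow> is_filter u"
  by (simp add: Ul_def is_ultrafilter_def)

lemma ultra_bot: "u \<in> Ul \<Longrightarrow> bot \<notin> u"
proof -
  assume "u \<in> Ul"
  then have "is_filter u" "u \<noteq> UNIV" unfolding Ul_def is_ultrafilter_def by auto
  then show "bot \<notin> u" using filt_proper[of u] by auto
qed

lemma ultra_compl:
  assumes u: "u \<in> Ul" and a: "a \<notin> u" shows "- a \<in> u"
proof -
  have uf: "is_filter u" using u by (rule ultra_filter)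
  have mx: "\<forall>G. is_filter G \<and> G \<noteq> UNIV \<and> u \<subseteq> G \<longrightarrow> G = u"
    using u unfolding Ul_def is_ultrafilter_def by simp
  let ?G = "gen2 u {x. a \<le> x}"
  have G: "is_filter ?G" using uf principal_filter by (rule gen2_filter)
  have "u \<subseteq> ?G" using principal_filter by (rule gen2_sub1)
  moreover have "a \<in> ?G" using gen2_sub2[OF uf] by blast
  ultimately have "\<not> (?G \<noteq> UNIV)" using a G mx by blast
  then have "bot \<in> ?G" by simp
  then obtain m where m: "m \<in> u" "inf m a \<le> bot" using gen2_bot_principal by blast
  then have "inf m a = bot" by (simp add: bot_unique)
  then have "m \<le> - a" by (simp add: inf_shunt)
  then show ?thesis using filt_up[OF uf m(1)] by simp
qed

lemma ultra_inf:
  assumes u: "u \<in> Ul" shows "(inf a b \<in> u) = (a \<in> u \<and> b \<in> u)"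
proof -
  have uf: "is_filter u" using u by (rule ultra_filter)
  show ?thesis
  proof
    assume h: "inf a b \<in> u"
    have "a \<in> u" using filt_up[OF uf h] by simp
    moreover have "b \<in> u" using filt_up[OF uf h] by simp
    ultimately show "a \<in> u \<and> b \<in> u" ..
  next
    assume "a \<in> u \<and> b \<in> u"
    then show "inf a b \<in> u" using filt_inf[OF uf] by simp
  qed
qed

lemma phi_inf: "phi (inf a b) = phi a \<inter> phi b"
  unfolding phi_def by (auto simp: ultra_inf)

lemma phi_top: "phi top = Ul"
  unfolding phi_def by (auto intro: filt_top ultra_filter)

lemma phi_mono: "a \<le> b \<Longrightarrow> phi a \<subseteq> phi b"
  unfolding phi_def by (auto intro: filt_up ultra_filter)

lemma phi_sub: "phi a \<subseteq> Ul" unfolding phi_def by blast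

lemma ultra_not_both: "u \<in> Ul \<Longrightarrow> a \<in> u \<Longrightarrow> - a \<in> u \<Longrightarrow> False"
proof -
  assume u: "u \<in> Ul" and "a \<in> u" "- a \<in> u"
  then have "inf a (- a) \<in> u" by (intro filt_inf[OF ultra_filter[OF u]])
  then have "bot \<in> u" by simp
  then show False using ultra_bot[OF u] by simp
qed

lemma phi_compl: "phi (- a) = Ul - phi a"
  unfolding phi_def using ultra_compl ultra_not_both by blast

definition filt_of :: "'a::boolean_algebra set set \<Rightarrow> 'a set" where
  "filt_of C = {a. C \<subseteq> phi a}"

lemma filt_of_filter: assumes "C \<subseteq> Ul" shows "is_filter (filt_of C)"
  unfolding is_filter_def filt_of_def
proof (intro conjI ballI allI impI)
  show "top \<in> {a. C \<subseteq> phi a}" using assms by (simp add: phi_top)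
next
  fix a b assume "a \<in> {a. C \<subseteq> phi a}" "a \<le> b"
  then show "b \<in> {a. C \<subseteq> phi a}" using phi_mono by (metis (no_types, lifting) mem_Collect_eq order_trans)
next
  fix a b assume "a \<in> {a. C \<subseteq> phi a}" "b \<in> {a. C \<subseteq> phi a}"
  then show "inf a b \<in> {a. C \<subseteq> phi a}" by (simp add: phi_inf)
qed

lemma closed_eq:
  assumes C: "stone_closed C" shows "C = phiF (filt_of C)"
proof
  show "C \<subseteq> phiF (filt_of C)"
    using C unfolding stone_closed_def phiF_def filt_of_def phi_def by blast
next
  show "phiF (filt_of C) \<subseteq> C"
  proof
    fix u assume u: "u \<in> phiF (filt_of C)"
    then have uU: "u \<in> Ul" and fu: "filt_of C \<subseteq> u" unfolding phiF_def by auto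
    show "u \<in> C"
    proof (rule ccontr)
      assume "u \<notin> C"
      then have "u \<in> Ul - C" using uU by blast
      then obtain a where a: "u \<in> phi a" "phi a \<subseteq> Ul - C"
        using C unfolding stone_closed_def stone_open_def by blast
      have Cs: "C \<subseteq> Ul" using C unfolding stone_closed_def by simp
      have "C \<subseteq> phi (- a)" using a(2) Cs by (auto simp: phi_compl)
      then have "- a \<in> u" using fu unfolding filt_of_def by blast
      moreover have "a \<in> u" using a(1) unfolding phi_def by blast
      ultimately show False using ultra_not_both uU by blast
    qed
  qed
qed

lemma phiF_closed:
  assumes F: "is_filter F" shows "stone_closed (phiF F)"
  unfolding stone_closed_def stone_open_def
proof (intro conjI ballI)
  show "phiF F \<subseteq> Ul" unfolding phiF_def by blast
  show "Ul - phiF F \<subseteq> Ul" by blast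
next
  fix w assume w: "w \<in> Ul - phiF F"
  then obtain a where a: "a \<in> F" "a \<notin> w" unfolding phiF_def by blast
  then have "- a \<in> w" using w ultra_compl by blast
  moreover have "phi (- a) \<subseteq> Ul - phiF F"
    using a(1) ultra_not_both unfolding phi_def phiF_def by blast
  ultimately show "\<exists>b. w \<in> phi b \<and> phi b \<subseteq> Ul - phiF F"
    using w unfolding phi_def by blast
qed

lemma phiF_sub_phi:
  assumes F: "is_filter F" and s: "phiF F \<subseteq> phi a" shows "a \<in> F"
proof (rule ccontr)
  assume na: "a \<notin> F"
  let ?G = "gen2 F {x. - a \<le> x}"
  have G: "is_filter ?G" using gen2_filter F principal_filter by blast
  have "bot \<notin> ?G"
  proof
    assume "bot \<in> ?G"
    then obtain f where f: "f \<in> F" "inf f (- a) \<le> bot" using gen2_bot_principal by blast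
    then have "inf f (- a) = bot" by (simp add: bot_unique)
    then have "f \<le> - (- a)" by (simp only: inf_shunt)
    then have "f \<le> a" by simp
    then show False using f na F filt_up by blast
  qed
  then obtain u where u: "u \<in> Ul" "?G \<subseteq> u" using ultra_exists G by blast
  have "F \<subseteq> u" using u gen2_sub1 principal_filter by blast
  then have "a \<in> u" using s u unfolding phiF_def phi_def by blast
  moreover have "- a \<in> u" using u gen2_sub2[OF F] by blast
  ultimately show False using ultra_not_both u by blast
qed

lemma compact:
  assumes D: "is_filter D" and W: "stone_open W" and s: "phiF D \<subseteq> W"
  shows "\<exists>b\<in>D. phi b \<subseteq> W"
proof (rule ccontr)
  assume nb: "\<not> (\<exists>b\<in>D. phi b \<subseteq> W)"
  let ?C = "Ul - W"
  have Cc: "stone_closed ?C" using W unfolding stone_closed_def stone_open_def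
    by (simp add: Diff_Diff_Int inf.absorb2)
  let ?H = "filt_of ?C"
  have G0: "is_filter ?H" using filt_of_filter by blast
  have Ceq: "?C = phiF ?H" using closed_eq[OF Cc] .
  let ?G = "gen2 D ?H"
  have G: "is_filter ?G" using gen2_filter D G0 by blast
  have "bot \<notin> ?G"
  proof
    assume "bot \<in> ?G"
    then obtain d g where dg: "d \<in> D" "g \<in> ?H" "inf d g \<le> bot" unfolding gen2_def by blast
    then obtain v where v: "v \<in> phi d" "v \<notin> W" using nb by blast
    then have "v \<in> ?C" using phi_sub by blast
    then have "g \<in> v" using dg(2) unfolding filt_of_def phi_def by blast
    moreover have vU: "v \<in> Ul" "d \<in> v" using v unfolding phi_def by auto
    ultimately have "inf d g \<in> v" using ultra_inf by blast
    then have "bot \<in> v" using filt_up[OF ultra_filter[OF vU(1)] _ dg(3)] by simp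
    then show False using ultra_bot vU by blast
  qed
  then obtain v where v: "v \<in> Ul" "?G \<subseteq> v" using ultra_exists G by blast
  have "D \<subseteq> v" using v gen2_sub1[OF G0] by blast
  then have "v \<in> W" using s v unfolding phiF_def by blast
  moreover have "?H \<subseteq> v" using v gen2_sub2[OF D] by blast
  then have "v \<in> ?C" using Ceq v unfolding phiF_def by blast
  ultimately show False by blast
qed

lemma open_minus:
  assumes v: "v \<in> Ul" shows "stone_open (Ul - {v})"
  unfolding stone_open_def
proof (intro conjI ballI)
  show "Ul - {v} \<subseteq> Ul" by blast
next
  fix w assume w: "w \<in> Ul - {v}"
  have "\<not> w \<subseteq> v"
  proof
    assume "w \<subseteq> v"
    moreover have "is_filter v" "v \<noteq> UNIV" using v unfolding Ul_def is_ultrafilter_def by auto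
    moreover have "\<forall>G. is_filter G \<and> G \<noteq> UNIV \<and> w \<subseteq> G \<longrightarrow> G = w"
      using w unfolding Ul_def is_ultrafilter_def by auto
    ultimately have "v = w" by blast
    then show False using w by blast
  qed
  then obtain a where a: "a \<in> w" "a \<notin> v" by blast
  then have "phi a \<subseteq> Ul - {v}" unfolding phi_def by blast
  then show "\<exists>a. w \<in> phi a \<and> phi a \<subseteq> Ul - {v}" using a w unfolding phi_def by blast
qed

lemma imp_mono2: assumes "cond_alg imp" "b \<le> c" shows "imp a b \<le> imp a c"
proof -
  have "inf (imp a b) (imp a c) = imp a (inf b c)" using assms(1) by (simp add: cond_alg_def)
  also have "inf b c = b" using assms(2) by (rule inf_absorb1)
  finally show ?thesis by (metis inf.orderI)
qed

lemma imp_anti1: assumes "cond_alg imp" "a \<le> a'" shows "imp a' c \<le> imp a c"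
proof -
  have "imp (sup a a') c \<le> inf (imp a c) (imp a' c)" using assms(1) by (simp add: cond_alg_def)
  also have "sup a a' = a'" using assms(2) by (rule sup_absorb2)
  finally show ?thesis by simp
qed

lemma D_filter:
  assumes ca: "cond_alg imp" and u: "u \<in> Ul" and F: "is_filter F"
  shows "is_filter (D_imp imp u F)"
  unfolding is_filter_def D_imp_def
proof (intro conjI ballI allI impI)
  have uf: "is_filter u" using u by (rule ultra_filter)
  have "imp top top = top" using ca by (simp add: cond_alg_def)
  moreover have "top \<in> u" using uf by (rule filt_top)
  ultimately have "imp top top \<in> u" by simp
  moreover have "top \<in> F" using F by (rule filt_top)
  ultimately show "top \<in> {b. \<exists>a\<in>F. imp a b \<in> u}" by blast
next
  have uf: "is_filter u" using u by (rule ultra_filter)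
  fix x y assume "x \<in> {b. \<exists>a\<in>F. imp a b \<in> u}" and xy: "x \<le> y"
  then obtain a where a: "a \<in> F" "imp a x \<in> u" by blast
  have "imp a x \<le> imp a y" using ca xy by (rule imp_mono2)
  then have "imp a y \<in> u" using filt_up[OF uf a(2)] by blast
  then show "y \<in> {b. \<exists>a\<in>F. imp a b \<in> u}" using a(1) by blast
next
  have uf: "is_filter u" using u by (rule ultra_filter)
  fix x y assume "x \<in> {b. \<exists>a\<in>F. imp a b \<in> u}" "y \<in> {b. \<exists>a\<in>F. imp a b \<in> u}"
  then obtain a a' where aa: "a \<in> F" "imp a x \<in> u" "a' \<in> F" "imp a' y \<in> u" by blast
  have "imp a x \<le> imp (inf a a') x" using ca by (rule imp_anti1) simp
  then have 1: "imp (inf a a') x \<in> u" using filt_up[OF uf aa(2)] by blast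
  have "imp a' y \<le> imp (inf a a') y" using ca by (rule imp_anti1) simp
  then have 2: "imp (inf a a') y \<in> u" using filt_up[OF uf aa(4)] by blast
  have "inf (imp (inf a a') x) (imp (inf a a') y) \<in> u" using filt_inf[OF uf 1 2] .
  moreover have "inf (imp (inf a a') x) (imp (inf a a') y) = imp (inf a a') (inf x y)"
    using ca by (simp add: cond_alg_def)
  ultimately have "imp (inf a a') (inf x y) \<in> u" by simp
  moreover have "inf a a' \<in> F" using aa F filt_inf by blast
  ultimately show "inf x y \<in> {b. \<exists>a\<in>F. imp a b \<in> u}" by blast
qed

lemma stone_open_Ul: "stone_open Ul"
  unfolding stone_open_def
proof (intro conjI ballI)
  show "Ul \<subseteq> Ul" by simp
next
  fix u :: "'a set" assume "u \<in> Ul"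
  then show "\<exists>a. u \<in> phi a \<and> phi a \<subseteq> Ul" by (intro exI[of _ top]) (simp add: phi_top)
qed

lemma stone_closed_empty: "stone_closed {}"
  unfolding stone_closed_def using stone_open_Ul by simp

lemma part1_sub:
  assumes ca: "cond_alg imp" and u: "u \<in> imp_T imp U V"
    and Y: "stone_closed Y" "Y \<subseteq> U" and W: "stone_open W" "V \<subseteq> W"
  shows "\<exists>a b. Y \<subseteq> phi a \<and> phi b \<subseteq> W \<and> u \<in> phi (imp a b)"
proof -
  have uU: "u \<in> Ul" and uT: "\<forall>Z. Z \<subseteq> U \<longrightarrow> T_img imp u Z \<subseteq> V" using u unfolding imp_T_def by auto
  let ?H = "filt_of Y"
  have H: "is_filter ?H" using Y(1) filt_of_filter unfolding stone_closed_def by blast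
  have Yeq: "Y = phiF ?H" using closed_eq[OF Y(1)] .
  let ?D = "D_imp imp u ?H"
  have D: "is_filter ?D" using D_filter[OF ca uU H] .
  have "phiF ?D \<subseteq> V"
  proof
    fix v assume v: "v \<in> phiF ?D"
    then have "D_imp imp u ?H \<subseteq> v" unfolding phiF_def by blast
    then have "T_rel imp u Y v" unfolding T_rel_def using H Yeq by blast
    then have "v \<in> T_img imp u Y" using v unfolding T_img_def phiF_def by blast
    then show "v \<in> V" using uT Y(2) by blast
  qed
  then have "phiF ?D \<subseteq> W" using W(2) by blast
  then obtain b where b: "b \<in> ?D" "phi b \<subseteq> W" using compact[OF D W(1)] by blast
  then obtain a where a: "a \<in> ?H" "imp a b \<in> u" unfolding D_imp_def by blast
  have "Y \<subseteq> phi a" using a(1) unfolding filt_of_def by blast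
  moreover have "u \<in> phi (imp a b)" using a(2) uU unfolding phi_def by blast
  ultimately have "Y \<subseteq> phi a \<and> phi b \<subseteq> W \<and> u \<in> phi (imp a b)" using b(2) by (intro conjI)
  then show ?thesis by blast
qed

lemma part1_sup:
  assumes ca: "cond_alg imp" and UV: "U \<subseteq> Ul" "V \<subseteq> Ul" and uU: "u \<in> Ul"
    and h: "\<And>Y W. stone_closed Y \<Longrightarrow> Y \<subseteq> U \<Longrightarrow> stone_open W \<Longrightarrow> V \<subseteq> W \<Longrightarrow>
              \<exists>a b. Y \<subseteq> phi a \<and> phi b \<subseteq> W \<and> u \<in> phi (imp a b)"
  shows "u \<in> imp_T imp U V"
  unfolding imp_T_def
proof (intro CollectI conjI allI impI subsetI uU)
  fix Z v assume Z: "Z \<subseteq> U" and v: "v \<in> T_img imp u Z"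
  then have vU: "v \<in> Ul" and "T_rel imp u Z v" unfolding T_img_def by auto
  then obtain F where F: "is_filter F" "Z = phiF F" "D_imp imp u F \<subseteq> v" unfolding T_rel_def by blast
  show "v \<in> V"
  proof (rule ccontr)
    assume nv: "v \<notin> V"
    have c1: "stone_closed Z" using F phiF_closed by simp
    have c2: "stone_open (Ul - {v})" using open_minus[OF vU] .
    have c3: "V \<subseteq> Ul - {v}" using nv UV by blast
    obtain a b where ab: "Z \<subseteq> phi a" "phi b \<subseteq> Ul - {v}" "u \<in> phi (imp a b)"
      using h[OF c1 Z c2 c3] by (elim exE conjE)
    have "a \<in> F" using phiF_sub_phi F ab(1) by blast
    then have "b \<in> D_imp imp u F" using ab(3) unfolding D_imp_def phi_def by blast
    then have "b \<in> v" using F by blast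
    then have "v \<in> phi b" using vU unfolding phi_def by blast
    then show False using ab(2) by blast
  qed
qed

lemma mem_RHS:
  "u \<in> (\<Inter>(Y, W) \<in> {(Y, W). stone_closed Y \<and> Y \<subseteq> U \<and> stone_open W \<and> V \<subseteq> W}.
                 \<Union>(a, b) \<in> {(a, b). Y \<subseteq> phi a \<and> phi b \<subseteq> W}. phi (imp a b))
   \<longleftrightarrow> (\<forall>Y W. stone_closed Y \<and> Y \<subseteq> U \<and> stone_open W \<and> V \<subseteq> W \<longrightarrow>
          (\<exists>a b. Y \<subseteq> phi a \<and> phi b \<subseteq> W \<and> u \<in> phi (imp a b)))"
  by auto

lemma P2: "cond_alg_powerset Ul (imp_T imp)"
  unfolding cond_alg_powerset_def
proof (intro conjI allI impI)
  fix U V W :: "'a::boolean_algebra set set"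
  show "imp_T imp U V \<subseteq> Ul" unfolding imp_T_def by blast
  show "imp_T imp U Ul = Ul" unfolding imp_T_def T_img_def by blast
  show "imp_T imp U V \<inter> imp_T imp U W = imp_T imp U (V \<inter> W)" unfolding imp_T_def by blast
  show "imp_T imp (U \<union> V) W \<subseteq> imp_T imp U W \<inter> imp_T imp V W" unfolding imp_T_def by blast
qed

theorem theorem2p14:
  fixes imp :: "'a::boolean_algebra \<Rightarrow> 'a \<Rightarrow> 'a"
  assumes "cond_alg imp"
  shows "(\<forall>U V. U \<subseteq> Ul \<and> V \<subseteq> Ul \<longrightarrow>
            imp_T imp U V =
              (\<Inter>(Y, W) \<in> {(Y, W). stone_closed Y \<and> Y \<subseteq> U \<and> stone_open W \<and> V \<subseteq> W}.
                 \<Union>(a, b) \<in> {(a, b). Y \<subseteq> phi a \<and> phi b \<subseteq> W}. phi (imp a b)))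
         \<and> cond_alg_powerset Ul (imp_T imp)"
proof (rule conjI)
  show "\<forall>U V. U \<subseteq> Ul \<and> V \<subseteq> Ul \<longrightarrow>
            imp_T imp U V =
              (\<Inter>(Y, W) \<in> {(Y, W). stone_closed Y \<and> Y \<subseteq> U \<and> stone_open W \<and> V \<subseteq> W}.
                 \<Union>(a, b) \<in> {(a, b). Y \<subseteq> phi a \<and> phi b \<subseteq> W}. phi (imp a b))"
  proof (intro allI impI set_eqI)
    fix U V :: "'a set set" and u assume UV: "U \<subseteq> Ul \<and> V \<subseteq> Ul"
    show "u \<in> imp_T imp U V \<longleftrightarrow> u \<in> (\<Inter>(Y, W) \<in> {(Y, W). stone_closed Y \<and> Y \<subseteq> U \<and> stone_open W \<and> V \<subseteq> W}.
                 \<Union>(a, b) \<in> {(a, b). Y \<subseteq> phi a \<and> phi b \<subseteq> W}. phi (imp a b))"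
      unfolding mem_RHS
    proof
      assume u: "u \<in> imp_T imp U V"
      show "\<forall>Y W. stone_closed Y \<and> Y \<subseteq> U \<and> stone_open W \<and> V \<subseteq> W \<longrightarrow>
          (\<exists>a b. Y \<subseteq> phi a \<and> phi b \<subseteq> W \<and> u \<in> phi (imp a b))"
        using part1_sub[OF assms u] by blast
    next
      assume h0: "\<forall>Y W. stone_closed Y \<and> Y \<subseteq> U \<and> stone_open W \<and> V \<subseteq> W \<longrightarrow>
          (\<exists>a b. Y \<subseteq> phi a \<and> phi b \<subseteq> W \<and> u \<in> phi (imp a b))"
      then have h: "\<And>Y W. stone_closed Y \<Longrightarrow> Y \<subseteq> U \<Longrightarrow> stone_open W \<Longrightarrow> V \<subseteq> W \<Longrightarrow>
              \<exists>a b. Y \<subseteq> phi a \<and> phi b \<subseteq> W \<and> u \<in> phi (imp a b)"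
        by blast
      have "{} \<subseteq> U" "V \<subseteq> Ul" using UV by auto
      from h[OF stone_closed_empty this(1) stone_open_Ul this(2)]
      obtain a b where "u \<in> phi (imp a b)" by (elim exE conjE)
      then have "u \<in> Ul" by (rule subsetD[OF phi_sub])
      then show "u \<in> imp_T imp U V" using part1_sup[OF assms _ _ _ h] UV by blast
    qed
  qed
next
  show "cond_alg_powerset Ul (imp_T imp)" by (rule P2)
qed

end
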